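(* Let $\alpha,\beta$ be words over $X$ such that $\alpha\beta$ has no repeated letters, $|\alpha|$ is even, and $|\beta|=2n$ with $n\ge1$. Then $$f[\alpha]^{\,n-1}\,f[\alpha\beta]=\sum s(\beta,x_1y_1\ldots x_ny_n)\,f[\alpha x_1y_1]\,f[\alpha x_2y_2]\cdots f[\alpha x_ny_n].$$ The sum is over all perfect matchings $\{x_1,y_1\},\ldots,\{x_n,y_n\}$ of the set of letters of $\beta$, each matching counted once. The summand does not depend on how the matching is listed.
   Context: Setting. Let $X$ be a set and $R$ a commutative ring. Let $f$ assign to each ordered pair $(x,y)\in X\times X$ an element $f[xy]\in R$, subject to $f[xy]=-f[yx]$ and $f[xx]=0$ for all $x,y\in X$. Words. A word is a finite sequence of elements (letters) of $X$. Concatenation is written by juxtaposition, $\epsilon$ is the empty word, and $|\alpha|$ is the length of $\alpha$. For words $\alpha,\beta$, the word $\alpha\setminus\beta$ is obtained from $\alpha$ by deleting every letter that occurs in $\beta$. Sign. For words $\alpha,\beta$, set $s(\alpha,\beta)=0$ if $\alpha$ or $\beta$ has a repeated letter, or if $\beta$ contains a letter not in $\alpha$. Otherwise $s(\alpha,\beta)\in\{\pm1\}$ is the sign of the permutation that rearranges $\alpha$ into the word $\beta(\alpha\setminus\beta)$. Pfaffian. Let $\alpha=x_1\ldots x_{2n}$ be a word with distinct letters. Then $$f[\alpha]=\sum s(\alpha,y_1\ldots y_{2n})\,f[y_1y_2]\cdots f[y_{2n-1}y_{2n}],$$ where the sum is over the $(2n-1)(2n-3)\cdots1$ partitions of $\{x_1,\ldots,x_{2n}\}$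 into pairs $\{y_1,y_2\},\ldots,\{y_{2n-1},y_{2n}\}$. Each term does not depend on the order in which the pairs or their elements are listed. Further conventions: $f[\epsilon]=1$; $f[\alpha]=0$ if $\alpha$ has a repeated letter; and $f[\alpha]=0$ if $|\alpha|$ is odd. *)

theory Defs
  imports "HOL-Combinatorics.Permutations" "HOL-Library.Disjoint_Sets"
begin

definition word_minus :: "'a list \<Rightarrow> 'a list \<Rightarrow> 'a list" where
  "word_minus \<alpha> \<beta> = filter (\<lambda>x. x \<notin> set \<beta>) \<alpha>"

definition rearr_perm :: "'a list \<Rightarrow> 'a list \<Rightarrow> nat \<Rightarrow> nat" where
  "rearr_perm \<alpha> \<gamma> i = (if i < length \<alpha> then (THE j. j < length \<alpha> \<and> \<alpha> ! j = \<gamma> ! i) else i)"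

definition sgnw :: "'a list \<Rightarrow> 'a list \<Rightarrow> int" where
  "sgnw \<alpha> \<beta> = (if \<not> distinct \<alpha> \<or> \<not> distinct \<beta> \<or> \<not> set \<beta> \<subseteq> set \<alpha> then 0
     else sign (rearr_perm \<alpha> (\<beta> @ word_minus \<alpha> \<beta>)))"

definition perfect_matching :: "'a set \<Rightarrow> 'a set set \<Rightarrow> bool" where
  "perfect_matching S M \<longleftrightarrow> partition_on S M \<and> (\<forall>e\<in>M. card e = 2)"

definition listing_of :: "'a set set \<Rightarrow> ('a \<times> 'a) list \<Rightarrow> bool" where
  "listing_of M ps \<longleftrightarrow> distinct ps \<and> length ps = card M \<and> set (map (\<lambda>(x,y). {x,y}) ps) = M"

definition flat_pairs :: "('a \<times> 'a) list \<Rightarrow> 'a list" where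
  "flat_pairs ps = concat (map (\<lambda>(x,y). [x,y]) ps)"

text \<open>Sum over perfect matchings of the letters of beta of
  s(beta, y1 y2 ... ) * g y1 y2 * ... * g y_{2n-1} y_{2n}, with an arbitrary listing of each
  matching (the paper notes the summand does not depend on the listing).\<close>
definition matching_sum :: "('a \<Rightarrow> 'a \<Rightarrow> 'r::comm_ring_1) \<Rightarrow> 'a list \<Rightarrow> 'r" where
  "matching_sum g \<beta> = (\<Sum>M | perfect_matching (set \<beta>) M.
      (let ps = (SOME ps. listing_of M ps) in
        of_int (sgnw \<beta> (flat_pairs ps)) * prod_list (map (\<lambda>(x,y). g x y) ps)))"

definition pf :: "('a \<Rightarrow> 'a \<Rightarrow> 'r::comm_ring_1) \<Rightarrow> 'a list \<Rightarrow> 'r" where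
  "pf f \<alpha> = (if \<alpha> = [] then 1 else if \<not> distinct \<alpha> then 0 else if odd (length \<alpha>) then 0
     else matching_sum f \<alpha>)"

end

theory Submission
  imports Defs
begin

definition dl :: "nat \<Rightarrow> 'a list \<Rightarrow> 'a list" where
  "dl i w = take i w @ drop (Suc i) w"

lemma length_dl[simp]: "i < length w \<Longrightarrow> length (dl i w) = length w - 1"
  by (simp add: dl_def)

lemma nth_dl: "i < length w \<Longrightarrow> k < length w - 1 \<Longrightarrow> dl i w ! k = w ! (if k < i then k else Suc k)"
  by (auto simp: dl_def nth_append min_def)

lemma dl_Cons0[simp]: "dl 0 (x # w) = w" by (simp add: dl_def)
lemma dl_ConsSuc[simp]: "dl (Suc i) (x # w) = x # dl i w" by (simp add: dl_def)

lemma dl_append: "dl i (A @ B) = (if i < length A then dl i A @ B else A @ dl (i - length A) B)"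
  by (auto simp: dl_def Suc_diff_le)

function pfr :: "('a \<Rightarrow> 'a \<Rightarrow> 'r::comm_ring_1) \<Rightarrow> 'a list \<Rightarrow> 'r" where
  "pfr g [] = 1"
| "pfr g (x # w) = (\<Sum>i<length w. (-1)^i * g x (w!i) * pfr g (dl i w))"
  by pat_completeness auto
termination by (relation "measure (\<lambda>(g,w). length w)") auto

lemma pfr_odd: "odd (length w) \<Longrightarrow> pfr g w = 0"
proof (induction "length w" arbitrary: w rule: less_induct)
  case less
  show ?case
  proof (cases w)
    case Nil then show ?thesis using less by simp
  next
    case (Cons x w')
    have "pfr g (dl i w') = 0" if "i < length w'" for i
      using less Cons that by (intro less(1)) auto
    then show ?thesis using Cons by simp
  qed
qed


abbreviation ix :: "nat \<Rightarrow> nat \<Rightarrow> nat" where "ix i q \<equiv> (if q < i then q else q - 1)"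

lemma reidx:
  assumes "i < m"
  shows "(\<Sum>k<m-1. h k) = (\<Sum>q\<in>{..<m}-{i}. h (ix i q))"
proof -
  have "bij_betw (\<lambda>q. ix i q) ({..<m}-{i}) {..<m-1}"
    by (rule bij_betw_byWitness[where f'="\<lambda>k. if k < i then k else Suc k"]) (use assms in auto)
  from sum.reindex_bij_betw[OF this, of h] show ?thesis by simp
qed

lemma nth_dl_ix: "i < length w \<Longrightarrow> q < length w \<Longrightarrow> q \<noteq> i \<Longrightarrow> dl i w ! ix i q = w ! q"
  by (subst nth_dl) auto

lemma dl_dl_comm:
  assumes "i < length w" "q < length w" "i \<noteq> q"
  shows "dl (ix i q) (dl i w) = dl (ix q i) (dl q w)"
proof (rule nth_equalityI)
  show "length (dl (ix i q) (dl i w)) = length (dl (ix q i) (dl q w))"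
    using assms by auto
  fix k assume "k < length (dl (ix i q) (dl i w))"
  moreover have "ix i q < length w - 1" using assms by auto
  ultimately have k: "k < length w - 2" using assms by auto
  show "dl (ix i q) (dl i w) ! k = dl (ix q i) (dl q w) ! k"
  proof -
    have a: "ix i q < length w - 1" "ix q i < length w - 1" using assms by auto
    have "dl (ix i q) (dl i w) ! k = dl i w ! (if k < ix i q then k else Suc k)"
      using a k assms by (intro nth_dl) auto
    also have "\<dots> = w ! (if (if k < ix i q then k else Suc k) < i then (if k < ix i q then k else Suc k) else Suc (if k < ix i q then k else Suc k))"
      using a k assms by (intro nth_dl) auto
    also have "\<dots> = w ! (if (if k < ix q i then k else Suc k) < q then (if k < ix q i then k else Suc k) else Suc (if k < ix q i then k else Suc k))"
      using assms by (intro arg_cong[of _ _ "(!) w"]) presburger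
    also have "\<dots> = dl q w ! (if k < ix q i then k else Suc k)"
      using a k assms by (intro nth_dl[symmetric]) auto
    also have "\<dots> = dl (ix q i) (dl q w) ! k"
      using a k assms by (intro nth_dl[symmetric]) auto
    finally show ?thesis .
  qed
qed

lemma pair_antisym_sum:
  fixes t :: "nat \<Rightarrow> nat \<Rightarrow> 'r::comm_ring_1"
  assumes "\<And>i q. i \<noteq> q \<Longrightarrow> i < m \<Longrightarrow> q < m \<Longrightarrow> t q i = - t i q"
  shows "(\<Sum>i<m. \<Sum>q\<in>{..<m}-{i}. t i q) = 0"
proof -
  have "(\<Sum>i<m. \<Sum>q\<in>{..<m}-{i}. t i q) = (\<Sum>p\<in>(SIGMA i:{..<m}. {..<m}-{i}). t (fst p) (snd p))"
    by (subst sum.Sigma) (auto simp: split_beta)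
  also have "(SIGMA i:{..<m}. {..<m}-{i}) = {p. fst p < snd p \<and> snd p < m} \<union> {p. snd p < fst p \<and> fst p < m}"
    by auto
  also have "(\<Sum>p\<in>\<dots>. t (fst p) (snd p)) = (\<Sum>p\<in>{p. fst p < snd p \<and> snd p < m}. t (fst p) (snd p))
      + (\<Sum>p\<in>{p. snd p < fst p \<and> fst p < m}. t (fst p) (snd p))"
  proof (rule sum.union_disjoint)
    show "finite {p. fst p < snd p \<and> snd p < m}"
      by (rule finite_subset[of _ "{..<m} \<times> {..<m}"]) auto
    show "finite {p::nat\<times>nat. snd p < fst p \<and> fst p < m}"
      by (rule finite_subset[of _ "{..<m} \<times> {..<m}"]) auto
  qed auto
  also have "(\<Sum>p\<in>{p. snd p < fst p \<and> fst p < m}. t (fst p) (snd p))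
      = (\<Sum>p\<in>{p. fst p < snd p \<and> snd p < m}. t (snd p) (fst p))"
    by (rule sum.reindex_bij_witness[where i=prod.swap and j=prod.swap]) auto
  also have "\<dots> = - (\<Sum>p\<in>{p. fst p < snd p \<and> snd p < m}. t (fst p) (snd p))"
    unfolding sum_negf[symmetric] by (rule sum.cong[OF refl]) (rule assms, auto)
  finally show ?thesis by simp
qed

definition E :: "nat \<Rightarrow> nat \<Rightarrow> 'r::comm_ring_1" where
  "E i q = (-1::'r::comm_ring_1)^(i+q) * (if q < i then 1 else -1)"

lemma E_swap: "i \<noteq> q \<Longrightarrow> E q i = - E i q"
  by (auto simp: E_def add.commute)

lemma pfr_Cons_Cons:
  fixes g :: "'a \<Rightarrow> 'a \<Rightarrow> 'r::comm_ring_1"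
  shows "pfr g (x # y # w) = g x y * pfr g w -
     (\<Sum>i<length w. \<Sum>q\<in>{..<length w}-{i}. E i q * g x (w!i) * g y (w!q) * pfr g (dl (ix i q) (dl i w)))"
proof -
  have "pfr g (x # y # w) = g x y * pfr g w + (\<Sum>i<length w. (-1)^(Suc i) * g x (w!i) * pfr g (y # dl i w))"
    by (simp only: pfr.simps length_Cons sum.lessThan_Suc_shift) simp
  also have "(\<Sum>i<length w. (-1)^(Suc i) * g x (w!i) * pfr g (y # dl i w)) =
     - (\<Sum>i<length w. \<Sum>q\<in>{..<length w}-{i}. E i q * g x (w!i) * g y (w!q) * pfr g (dl (ix i q) (dl i w)))"
  proof -
    have "(-1)^(Suc i) * g x (w!i) * pfr g (y # dl i w) =
       - (\<Sum>q\<in>{..<length w}-{i}. E i q * g x (w!i) * g y (w!q) * pfr g (dl (ix i q) (dl i w)))"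
      if i: "i < length w" for i
    proof -
      have "pfr g (y # dl i w) = (\<Sum>k<length w - 1. (-1)^k * g y (dl i w ! k) * pfr g (dl k (dl i w)))"
        using i by simp
      also have "\<dots> = (\<Sum>q\<in>{..<length w}-{i}. (-1)^(ix i q) * g y (dl i w ! ix i q) * pfr g (dl (ix i q) (dl i w)))"
        by (rule reidx[OF i])
      also have "\<dots> = (\<Sum>q\<in>{..<length w}-{i}. (-1)^(ix i q) * g y (w ! q) * pfr g (dl (ix i q) (dl i w)))"
        by (rule sum.cong) (use i in \<open>auto simp: nth_dl_ix\<close>)
      finally have *: "pfr g (y # dl i w) = \<dots>" .
      have **: "(-1::'r)^(Suc i) * (-1)^(ix i q) = - E i q" if qq: "q < length w" "q \<noteq> i" for q
      proof (cases "q < i")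
        case True then show ?thesis by (simp add: E_def power_add)
      next
        case False
        then obtain r where "q = Suc r" using qq by (cases q) auto
        then show ?thesis using False qq by (simp add: E_def power_add)
      qed
      show ?thesis unfolding * sum_distrib_left sum_negf[symmetric]
      proof (rule sum.cong)
        fix q assume q: "q \<in> {..<length w} - {i}"
        have "(-1)^(Suc i) * g x (w!i) * ((-1)^(ix i q) * g y (w!q) * pfr g (dl (ix i q) (dl i w)))
          = ((-1::'r)^(Suc i) * (-1)^(ix i q)) * g x (w!i) * g y (w!q) * pfr g (dl (ix i q) (dl i w))"
          by (simp add: mult_ac)
        also have "\<dots> = - (E i q * g x (w!i) * g y (w!q) * pfr g (dl (ix i q) (dl i w)))"
          using q by (subst **) auto
        finally show "(-1)^(Suc i) * g x (w!i) * ((-1)^(ix i q) * g y (w!q) * pfr g (dl (ix i q) (dl i w)))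
          = - (E i q * g x (w!i) * g y (w!q) * pfr g (dl (ix i q) (dl i w)))" .
      qed simp
    qed
    then show ?thesis by (simp add: sum_negf)
  qed
  finally show ?thesis by simp
qed


lemma swap_pairs:
  fixes t :: "nat \<Rightarrow> nat \<Rightarrow> 'r::comm_ring_1"
  shows "(\<Sum>i<m. \<Sum>q\<in>{..<m}-{i}. t i q) = (\<Sum>i<m. \<Sum>q\<in>{..<m}-{i}. t q i)"
proof -
  have "(\<Sum>i<m. \<Sum>q\<in>{..<m}-{i}. t i q) = (\<Sum>p\<in>(SIGMA i:{..<m}. {..<m}-{i}). t (fst p) (snd p))"
    by (subst sum.Sigma) (auto simp: split_beta)
  also have "\<dots> = (\<Sum>p\<in>(SIGMA i:{..<m}. {..<m}-{i}). t (snd p) (fst p))"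
    by (rule sum.reindex_bij_witness[where i=prod.swap and j=prod.swap]) auto
  also have "\<dots> = (\<Sum>i<m. \<Sum>q\<in>{..<m}-{i}. t q i)"
    by (subst sum.Sigma) (auto simp: split_beta)
  finally show ?thesis .
qed

locale asym =
  fixes g :: "'a \<Rightarrow> 'a \<Rightarrow> 'r::comm_ring_1"
  assumes anti: "\<And>x y. g x y = - g y x"
begin

lemma pfr_swap_front: "pfr g (x # y # w) = - pfr g (y # x # w)"
proof -
  define t where "t = (\<lambda>x y i q. E i q * g x (w!i) * g y (w!q) * pfr g (dl (ix i q) (dl i w)))"
  have 1: "pfr g (x # y # w) = g x y * pfr g w - (\<Sum>i<length w. \<Sum>q\<in>{..<length w}-{i}. t x y i q)"
    unfolding t_def by (rule pfr_Cons_Cons)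
  have 2: "pfr g (y # x # w) = g y x * pfr g w - (\<Sum>i<length w. \<Sum>q\<in>{..<length w}-{i}. t y x i q)"
    unfolding t_def by (rule pfr_Cons_Cons)
  have "(\<Sum>i<length w. \<Sum>q\<in>{..<length w}-{i}. t y x i q) = (\<Sum>i<length w. \<Sum>q\<in>{..<length w}-{i}. t y x q i)"
    by (rule swap_pairs)
  also have "\<dots> = (\<Sum>i<length w. \<Sum>q\<in>{..<length w}-{i}. - t x y i q)"
  proof (intro sum.cong refl)
    fix i q assume iq: "i \<in> {..<length w}" "q \<in> {..<length w} - {i}"
    have e: "E q i = (- E i q :: 'r)" by (rule E_swap) (use iq in auto)
    have d: "dl (ix q i) (dl q w) = dl (ix i q) (dl i w)" by (rule dl_dl_comm) (use iq in auto)
    show "t y x q i = - t x y i q"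
      unfolding t_def e d by (simp add: mult_ac)
  qed
  finally have 3: "(\<Sum>i<length w. \<Sum>q\<in>{..<length w}-{i}. t y x i q) = - (\<Sum>i<length w. \<Sum>q\<in>{..<length w}-{i}. t x y i q)"
    by (simp add: sum_negf)
  show ?thesis unfolding 1 2 3 using anti[of x y] by (simp add: algebra_simps)
qed

lemma pfr_rep_front:
  assumes diag: "g x x = 0"
  shows "pfr g (x # x # w) = 0"
proof -
  define t where "t = (\<lambda>i q. E i q * g x (w!i) * g x (w!q) * pfr g (dl (ix i q) (dl i w)))"
  have 1: "pfr g (x # x # w) = g x x * pfr g w - (\<Sum>i<length w. \<Sum>q\<in>{..<length w}-{i}. t i q)"
    unfolding t_def by (rule pfr_Cons_Cons)
  have "(\<Sum>i<length w. \<Sum>q\<in>{..<length w}-{i}. t i q) = 0"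
  proof (rule pair_antisym_sum)
    fix i q :: nat assume iq: "i \<noteq> q" "i < length w" "q < length w"
    have e: "E q i = (- E i q :: 'r)" by (rule E_swap) (use iq in auto)
    have d: "dl (ix q i) (dl q w) = dl (ix i q) (dl i w)" by (rule dl_dl_comm) (use iq in auto)
    show "t q i = - t i q"
      unfolding t_def e d by (simp add: mult_ac)
  qed
  then show ?thesis unfolding 1 diag by simp
qed

end

lemma sum_split2:
  assumes "Suc p < n"
  shows "(\<Sum>i<n. h i) = h p + h (Suc p) + (\<Sum>i\<in>{..<n}-{p, Suc p}. h i)"
proof -
  have "(\<Sum>i<n. h i) = h p + (\<Sum>i\<in>{..<n}-{p}. h i)"
    using assms by (subst sum.remove[of _ p]) auto
  also have "(\<Sum>i\<in>{..<n}-{p}. h i) = h (Suc p) + (\<Sum>i\<in>{..<n}-{p}-{Suc p}. h i)"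
    using assms by (subst sum.remove[of _ "Suc p"]) auto
  also have "{..<n}-{p}-{Suc p} = {..<n}-{p, Suc p}" by auto
  finally show ?thesis by (simp add: add.assoc)
qed

lemma nth_mid: "i \<noteq> length A \<Longrightarrow> i \<noteq> Suc (length A) \<Longrightarrow> (A @ x # y # B) ! i = (A @ u # v # B) ! i"
  by (auto simp: nth_append nth_Cons split: nat.split)

lemma dl_mid:
  assumes "i \<noteq> length A" "i \<noteq> Suc (length A)"
  shows "dl i (A @ x # y # B) = (if i < length A then dl i A else A) @ x # y # (if i < length A then B else dl (i - length A - 2) B)"
proof (cases "i < length A")
  case True then show ?thesis by (simp add: dl_append)
next
  case False
  then obtain k where k: "i - length A = Suc (Suc k)" using assms
    by (metis Suc_diff_Suc diff_Suc_1 less_Suc_eq linorder_neqE_nat not_less_eq zero_less_diff)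
  then have "i - length A - 2 = k" by simp
  then show ?thesis using False k by (simp add: dl_append)
qed

lemma length_dl_le: "length (dl i A) \<le> length A"
  by (simp add: dl_def)

locale asymd = asym +
  assumes diag: "\<And>z. g z z = 0"
begin

lemma pfr_swap_rep:
  "pfr g (A @ x # y # B) = - pfr g (A @ y # x # B) \<and> pfr g (A @ x # x # B) = 0"
proof (induction "length A" arbitrary: A B rule: less_induct)
  case less
  show ?case
  proof (cases A)
    case Nil
    show ?thesis unfolding Nil append_Nil using pfr_swap_front[of x y B] pfr_rep_front[of x B, OF diag] by blast
  next
    case (Cons a A')
    let ?p = "length A'"
    define n where "n = length (A' @ x # y # B)"
    have n: "Suc ?p < n" by (simp add: n_def)
    have len: "length (A' @ u # v # B) = n" for u v by (simp add: n_def)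
    define C where "C i = (if i < ?p then dl i A' else A')" for i
    define D where "D i = (if i < ?p then B else dl (i - ?p - 2) B)" for i
    have CL: "length (C i) < length A" for i
      using length_dl_le[of i A'] by (auto simp: C_def Cons)
    have dm: "dl i (A' @ u # v # B) = C i @ u # v # D i" if "i \<noteq> ?p" "i \<noteq> Suc ?p" for i u v
      unfolding C_def D_def by (rule dl_mid) (use that in auto)
    have dp: "dl ?p (A' @ u # v # B) = A' @ v # B" for u v by (simp add: dl_append)
    have dp1: "dl (Suc ?p) (A' @ u # v # B) = A' @ u # B" for u v by (simp add: dl_append)
    have np: "(A' @ u # v # B) ! ?p = u" for u v by simp
    have np1: "(A' @ u # v # B) ! Suc ?p = v" for u v by (simp add: nth_append)
    have exp: "pfr g (A @ u # v # B) = (-1)^?p * g a u * pfr g (A' @ v # B) + (-1)^(Suc ?p) * g a v * pfr g (A' @ u # B)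
       + (\<Sum>i\<in>{..<n}-{?p, Suc ?p}. (-1)^i * g a ((A' @ x # y # B) ! i) * pfr g (C i @ u # v # D i))" for u v
    proof -
      define h where "h i = (-1)^i * g a ((A' @ u # v # B) ! i) * pfr g (dl i (A' @ u # v # B))" for i
      have "pfr g (A @ u # v # B) = (\<Sum>i<n. h i)"
        using Cons len[of u v] by (simp add: h_def)
      also have "\<dots> = h ?p + h (Suc ?p) + (\<Sum>i\<in>{..<n}-{?p, Suc ?p}. h i)" by (rule sum_split2[OF n])
      also have "(\<Sum>i\<in>{..<n}-{?p, Suc ?p}. h i)
         = (\<Sum>i\<in>{..<n}-{?p, Suc ?p}. (-1)^i * g a ((A' @ x # y # B) ! i) * pfr g (C i @ u # v # D i))"
        by (rule sum.cong[OF refl]) (simp add: h_def dm nth_mid[of _ A' u v B x y])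
      finally show ?thesis by (simp add: h_def dp dp1 np np1)
    qed
    have IH: "pfr g (C i @ x # y # D i) = - pfr g (C i @ y # x # D i) \<and> pfr g (C i @ x # x # D i) = 0" for i
      using less(1)[OF CL] by blast
    have s1: "pfr g (A @ x # y # B) = - pfr g (A @ y # x # B)"
      unfolding exp[of x y] exp[of y x] using IH
      by (simp add: sum_negf algebra_simps)
    have s2: "pfr g (A @ x # x # B) = 0"
      unfolding exp[of x x] using IH by simp
    show ?thesis using s1 s2 by blast
  qed
qed

lemma pfr_swap: "pfr g (A @ x # y # B) = - pfr g (A @ y # x # B)"
  using pfr_swap_rep by blast

lemma pfr_rep: "pfr g (A @ x # x # B) = 0"
  using pfr_swap_rep by blast

lemma pfr_move: "pfr g (A @ B @ x # C) = (-1)^length B * pfr g (A @ x # B @ C)"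
proof (induction B arbitrary: A)
  case Nil then show ?case by simp
next
  case (Cons b B)
  have "pfr g (A @ (b # B) @ x # C) = pfr g ((A @ [b]) @ B @ x # C)" by simp
  also have "\<dots> = (-1)^length B * pfr g ((A @ [b]) @ x # B @ C)" by (rule Cons)
  also have "pfr g ((A @ [b]) @ x # B @ C) = - pfr g (A @ x # b # B @ C)"
    using pfr_swap[of A b x "B @ C"] by simp
  finally show ?case by simp
qed

lemma pfr_nondistinct: "\<not> distinct w \<Longrightarrow> pfr g w = 0"
proof -
  assume "\<not> distinct w"
  then obtain xs ys zs y where w: "w = xs @ [y] @ ys @ [y] @ zs" using not_distinct_decomp by blast
  have "pfr g w = pfr g ((xs @ [y]) @ ys @ y # zs)" by (simp add: w)
  also have "\<dots> = (-1)^length ys * pfr g ((xs @ [y]) @ y # ys @ zs)" by (rule pfr_move)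
  also have "pfr g ((xs @ [y]) @ y # ys @ zs) = 0" using pfr_rep[of xs y "ys @ zs"] by simp
  finally show ?thesis by simp
qed

end

lemma sum_lessThan_add:
  fixes a b :: nat and h :: "nat \<Rightarrow> 'r::comm_monoid_add"
  shows "(\<Sum>j<a+b. h j) = (\<Sum>j<a. h j) + (\<Sum>k<b. h (a+k))"
  by (induction b) (simp_all add: add.assoc)

lemma sgn_ix:
  assumes "q \<noteq> i" "q < m" "i < m"
  shows "(-1::'r::comm_ring_1)^i * (-1)^(ix i q) = E i q"
proof (cases "q < i")
  case True then show ?thesis by (simp add: E_def power_add)
next
  case False
  then obtain r where "q = Suc r" using assms by (cases q) auto
  then show ?thesis using False assms by (simp add: E_def power_add)
qed

lemma ring4: "(c::'r::comm_ring_1) * d = e \<Longrightarrow> c * (d * x * y) * z = e * x * y * z"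
proof -
  assume "c * d = e"
  moreover have "c * (d * x * y) * z = (c * d) * x * y * z" by (simp only: mult.assoc)
  ultimately show ?thesis by simp
qed

definition LW :: "('a \<Rightarrow> 'a \<Rightarrow> 'r::comm_ring_1) \<Rightarrow> 'a list \<Rightarrow> 'a list \<Rightarrow> 'r" where
  "LW g u v = (\<Sum>i<length u. (-1)^i * pfr g (dl i u) * pfr g ((u!i) # v))"

definition RW :: "('a \<Rightarrow> 'a \<Rightarrow> 'r::comm_ring_1) \<Rightarrow> 'a list \<Rightarrow> 'a list \<Rightarrow> 'r" where
  "RW g u v = (\<Sum>j<length v. (-1)^j * pfr g (u @ [v!j]) * pfr g (dl j v))"

lemma LW_Cons:
  fixes g :: "'a \<Rightarrow> 'a \<Rightarrow> 'r::comm_ring_1"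
  shows "LW g (a # u) v = pfr g u * pfr g (a # v) + (\<Sum>q<length u. (-1)^q * g a (u!q) * LW g (dl q u) v)"
proof -
  let ?m = "length u"
  define t where "t i q = - E i q * g a (u!q) * pfr g (dl (ix i q) (dl i u)) * pfr g (u!i # v)" for i q
  have A: "LW g (a # u) v = pfr g u * pfr g (a # v) + (\<Sum>i<?m. (-1)^(Suc i) * pfr g (a # dl i u) * pfr g (u!i # v))"
    unfolding LW_def by (simp only: length_Cons sum.lessThan_Suc_shift) simp
  have B: "(-1)^(Suc i) * pfr g (a # dl i u) * pfr g (u!i # v) = (\<Sum>q\<in>{..<?m}-{i}. t i q)" if i: "i < ?m" for i
  proof -
    have "pfr g (a # dl i u) = (\<Sum>k<?m - 1. (-1)^k * g a (dl i u ! k) * pfr g (dl k (dl i u)))"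
      using i by simp
    also have "\<dots> = (\<Sum>q\<in>{..<?m}-{i}. (-1)^(ix i q) * g a (dl i u ! ix i q) * pfr g (dl (ix i q) (dl i u)))"
      by (rule reidx[OF i])
    also have "\<dots> = (\<Sum>q\<in>{..<?m}-{i}. (-1)^(ix i q) * g a (u ! q) * pfr g (dl (ix i q) (dl i u)))"
      by (rule sum.cong) (use i in \<open>auto simp: nth_dl_ix\<close>)
    finally have *: "pfr g (a # dl i u) = \<dots>" .
    show ?thesis unfolding * sum_distrib_left sum_distrib_right
    proof (rule sum.cong[OF refl])
      fix q assume q: "q \<in> {..<?m} - {i}"
      have "(-1::'r)^(Suc i) * (-1)^(ix i q) = - E i q" using sgn_ix[of q i ?m] q i by simp
      then show "(-1)^(Suc i) * ((-1)^(ix i q) * g a (u ! q) * pfr g (dl (ix i q) (dl i u))) * pfr g (u!i # v) = t i q"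
        unfolding t_def by (rule ring4)
    qed
  qed
  have C: "(\<Sum>i<?m. (\<Sum>q\<in>{..<?m}-{i}. t i q)) = (\<Sum>i<?m. (\<Sum>q\<in>{..<?m}-{i}. t q i))"
    by (rule swap_pairs)
  have D: "(\<Sum>q\<in>{..<?m}-{i}. t q i) = (-1)^i * g a (u!i) * LW g (dl i u) v" if i: "i < ?m" for i
  proof -
    have "LW g (dl i u) v = (\<Sum>k<?m - 1. (-1)^k * pfr g (dl k (dl i u)) * pfr g (dl i u ! k # v))"
      using i by (simp add: LW_def)
    also have "\<dots> = (\<Sum>q\<in>{..<?m}-{i}. (-1)^(ix i q) * pfr g (dl (ix i q) (dl i u)) * pfr g (dl i u ! ix i q # v))"
      by (rule reidx[OF i])
    finally have *: "LW g (dl i u) v = \<dots>" .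
    show ?thesis unfolding * sum_distrib_left
    proof (rule sum.cong[OF refl])
      fix q assume q: "q \<in> {..<?m} - {i}"
      have e: "E q i = (- E i q :: 'r)" by (rule E_swap) (use q in auto)
      have d: "dl (ix q i) (dl q u) = dl (ix i q) (dl i u)" by (rule dl_dl_comm) (use q i in auto)
      have s: "(-1::'r)^i * (-1)^(ix i q) = E i q" using sgn_ix[of q i ?m] q i by simp
      have n: "dl i u ! ix i q = u ! q" using q i by (intro nth_dl_ix) auto
      show "t q i = (-1)^i * g a (u!i) * ((-1)^(ix i q) * pfr g (dl (ix i q) (dl i u)) * pfr g (dl i u ! ix i q # v))"
        unfolding t_def e d n s[symmetric] by (simp add: mult_ac)
    qed
  qed
  show ?thesis unfolding A using B C D by simp
qed

lemma RW_Cons: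
  fixes g :: "'a \<Rightarrow> 'a \<Rightarrow> 'r::comm_ring_1"
  shows "RW g (a # u) v = (-1)^length u * pfr g u * pfr g (a # v) + (\<Sum>k<length u. (-1)^k * g a (u!k) * RW g (dl k u) v)"
proof -
  let ?m = "length u"
  have P: "pfr g (a # u @ [y]) = (\<Sum>k<?m. (-1)^k * g a (u!k) * pfr g (dl k u @ [y])) + (-1)^?m * g a y * pfr g u" for y
  proof -
    have "pfr g (a # u @ [y]) = (\<Sum>k<Suc ?m. (-1)^k * g a ((u @ [y])!k) * pfr g (dl k (u @ [y])))"
      by simp
    also have "\<dots> = (\<Sum>k<?m. (-1)^k * g a ((u @ [y])!k) * pfr g (dl k (u @ [y]))) + (-1)^?m * g a y * pfr g u"
      by (simp add: dl_append)
    also have "(\<Sum>k<?m. (-1)^k * g a ((u @ [y])!k) * pfr g (dl k (u @ [y]))) = (\<Sum>k<?m. (-1)^k * g a (u!k) * pfr g (dl k u @ [y]))"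
      by (rule sum.cong) (auto simp: dl_append nth_append)
    finally show ?thesis .
  qed
  have "RW g (a # u) v = (\<Sum>j<length v. (-1)^j * ((\<Sum>k<?m. (-1)^k * g a (u!k) * pfr g (dl k u @ [v!j])) + (-1)^?m * g a (v!j) * pfr g u) * pfr g (dl j v))"
    unfolding RW_def by (simp only: append_Cons P)
  also have "\<dots> = (\<Sum>k<?m. (-1)^k * g a (u!k) * (\<Sum>j<length v. (-1)^j * pfr g (dl k u @ [v!j]) * pfr g (dl j v)))
      + (-1)^?m * pfr g u * (\<Sum>j<length v. (-1)^j * g a (v!j) * pfr g (dl j v))"
  proof -
    have "(-1)^j * ((\<Sum>k<?m. (-1)^k * g a (u!k) * pfr g (dl k u @ [v!j])) + (-1)^?m * g a (v!j) * pfr g u) * pfr g (dl j v)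
      = (\<Sum>k<?m. (-1)^k * g a (u!k) * ((-1)^j * pfr g (dl k u @ [v!j]) * pfr g (dl j v)))
        + (-1)^?m * pfr g u * ((-1)^j * g a (v!j) * pfr g (dl j v))" for j
      by (simp add: sum_distrib_left sum_distrib_right distrib_left distrib_right mult_ac)
    then have "(\<Sum>j<length v. (-1)^j * ((\<Sum>k<?m. (-1)^k * g a (u!k) * pfr g (dl k u @ [v!j])) + (-1)^?m * g a (v!j) * pfr g u) * pfr g (dl j v))
      = (\<Sum>j<length v. (\<Sum>k<?m. (-1)^k * g a (u!k) * ((-1)^j * pfr g (dl k u @ [v!j]) * pfr g (dl j v))))
        + (\<Sum>j<length v. (-1)^?m * pfr g u * ((-1)^j * g a (v!j) * pfr g (dl j v)))"
      by (simp add: sum.distrib)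
    also have "(\<Sum>j<length v. (\<Sum>k<?m. (-1)^k * g a (u!k) * ((-1)^j * pfr g (dl k u @ [v!j]) * pfr g (dl j v))))
      = (\<Sum>k<?m. (\<Sum>j<length v. (-1)^k * g a (u!k) * ((-1)^j * pfr g (dl k u @ [v!j]) * pfr g (dl j v))))"
      by (rule sum.swap)
    finally show ?thesis by (simp add: sum_distrib_left)
  qed
  also have "(\<Sum>j<length v. (-1)^j * g a (v!j) * pfr g (dl j v)) = pfr g (a # v)" by simp
  finally show ?thesis by (simp add: RW_def)
qed

lemma wenzel: "LW g u v = RW g u v"
proof (induction "length u" arbitrary: u rule: less_induct)
  case less
  show ?case
  proof (cases u)
    case Nil
    have "pfr g [y] = 0" for y by simp
    then show ?thesis by (simp add: Nil LW_def RW_def)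
  next
    case (Cons a u')
    have IH: "LW g (dl k u') v = RW g (dl k u') v" if "k < length u'" for k
      using that Cons by (intro less) (simp add: dl_def)
    have "pfr g u' * pfr g (a # v) = (-1)^length u' * pfr g u' * pfr g (a # v)"
      using pfr_odd[of u' g] by (cases "even (length u')") auto
    then show ?thesis unfolding Cons LW_Cons RW_Cons using IH by simp
  qed
qed


context asymd begin

lemma fundamental:
  assumes dist: "distinct (\<alpha> @ x # \<gamma>)" and ev: "even (length \<alpha>)"
  shows "pfr g \<alpha> * pfr g (\<alpha> @ x # \<gamma>) = (\<Sum>k<length \<gamma>. (-1)^k * pfr g (\<alpha> @ [x, \<gamma>!k]) * pfr g (\<alpha> @ dl k \<gamma>))"
proof -
  let ?u = "\<alpha> @ [x]" and ?v = "\<alpha> @ \<gamma>"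
  have "LW g ?u ?v = (\<Sum>i<length \<alpha>. (-1)^i * pfr g (dl i ?u) * pfr g (?u!i # ?v)) + (-1)^length \<alpha> * pfr g \<alpha> * pfr g (x # ?v)"
    unfolding LW_def by (simp add: dl_append)
  also have "(\<Sum>i<length \<alpha>. (-1)^i * pfr g (dl i ?u) * pfr g (?u!i # ?v)) = 0"
  proof (rule sum.neutral, rule ballI)
    fix i assume "i \<in> {..<length \<alpha>}"
    then have nd: "\<not> distinct (?u!i # ?v)" by (simp add: nth_append)
    show "(-1)^i * pfr g (dl i ?u) * pfr g (?u!i # ?v) = 0" by (simp only: pfr_nondistinct[OF nd] mult_zero_right)
  qed
  also have "pfr g (x # ?v) = pfr g (\<alpha> @ x # \<gamma>)"
    using pfr_move[of "[]" \<alpha> x \<gamma>] ev by simp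
  finally have L: "LW g ?u ?v = pfr g \<alpha> * pfr g (\<alpha> @ x # \<gamma>)" using ev by simp
  have "RW g ?u ?v = (\<Sum>j<length \<alpha>. (-1)^j * pfr g (?u @ [?v!j]) * pfr g (dl j ?v))
     + (\<Sum>k<length \<gamma>. (-1)^(length \<alpha> + k) * pfr g (?u @ [?v!(length \<alpha> + k)]) * pfr g (dl (length \<alpha> + k) ?v))"
    unfolding RW_def by (simp add: sum_lessThan_add)
  also have "(\<Sum>j<length \<alpha>. (-1)^j * pfr g (?u @ [?v!j]) * pfr g (dl j ?v)) = 0"
  proof (rule sum.neutral, rule ballI)
    fix i assume "i \<in> {..<length \<alpha>}"
    then have nd: "\<not> distinct (?u @ [?v!i])" by (simp add: nth_append)
    show "(-1)^i * pfr g (?u @ [?v!i]) * pfr g (dl i ?v) = 0" by (simp only: pfr_nondistinct[OF nd] mult_zero_right mult_zero_left)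
  qed
  also have "(\<Sum>k<length \<gamma>. (-1)^(length \<alpha> + k) * pfr g (?u @ [?v!(length \<alpha> + k)]) * pfr g (dl (length \<alpha> + k) ?v))
     = (\<Sum>k<length \<gamma>. (-1)^k * pfr g (\<alpha> @ [x, \<gamma>!k]) * pfr g (\<alpha> @ dl k \<gamma>))"
    using ev by (intro sum.cong refl) (simp add: dl_append power_add)
  finally have R: "RW g ?u ?v = \<dots>" by simp
  show ?thesis using wenzel[of g ?u ?v] L R by simp
qed

lemma main_pfr:
  assumes "distinct (\<alpha> @ \<beta>)" "even (length \<alpha>)" "length \<beta> = 2 * n" "n \<ge> 1"
  shows "pfr g \<alpha> ^ (n - 1) * pfr g (\<alpha> @ \<beta>) = pfr (\<lambda>x y. pfr g (\<alpha> @ [x, y])) \<beta>"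
  using assms
proof (induction n arbitrary: \<beta>)
  case 0 then show ?case by simp
next
  case (Suc n)
  let ?B = "\<lambda>x y. pfr g (\<alpha> @ [x, y])"
  show ?case
  proof (cases "n = 0")
    case True
    then obtain x y where b: "\<beta> = [x, y]" using Suc.prems(3)
      by (cases \<beta>; cases "tl \<beta>"; auto)
    show ?thesis by (simp add: b True)
  next
    case False
    obtain x \<gamma> where b: "\<beta> = x # \<gamma>" using Suc.prems(3) by (cases \<beta>) auto
    have lg: "length \<gamma> = Suc (2 * n)" using Suc.prems(3) b by simp
    have IH: "pfr ?B (dl k \<gamma>) = pfr g \<alpha> ^ (n - 1) * pfr g (\<alpha> @ dl k \<gamma>)" if k: "k < length \<gamma>" for k
    proof -
      have "distinct (\<alpha> @ dl k \<gamma>)"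
      proof -
        have d: "distinct (\<alpha> @ \<gamma>)" using Suc.prems(1) b by auto
        have "distinct (dl k \<gamma>)" using d unfolding dl_def
          by (auto simp: set_take_disj_set_drop_if_distinct dest: in_set_takeD in_set_dropD)
        moreover have "set (dl k \<gamma>) \<subseteq> set \<gamma>" unfolding dl_def
          using set_take_subset set_drop_subset by fastforce
        ultimately show ?thesis using d by auto
      qed
      then show ?thesis using Suc.IH[of "dl k \<gamma>"] Suc.prems(2) False k lg by simp
    qed
    have "pfr ?B \<beta> = (\<Sum>k<length \<gamma>. (-1)^k * ?B x (\<gamma>!k) * pfr ?B (dl k \<gamma>))"
      by (simp add: b)
    also have "\<dots> = pfr g \<alpha> ^ (n - 1) * (\<Sum>k<length \<gamma>. (-1)^k * pfr g (\<alpha> @ [x, \<gamma>!k]) * pfr g (\<alpha> @ dl k \<gamma>))"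
      by (simp add: IH sum_distrib_left mult_ac)
    also have "\<dots> = pfr g \<alpha> ^ (n - 1) * (pfr g \<alpha> * pfr g (\<alpha> @ \<beta>))"
      using fundamental[of \<alpha> x \<gamma>] Suc.prems b by simp
    also have "\<dots> = pfr g \<alpha> ^ n * pfr g (\<alpha> @ \<beta>)"
      using False by (cases n) (auto simp: mult_ac)
    finally show ?thesis by simp
  qed
qed

end

definition perm_of :: "'a list \<Rightarrow> 'a list \<Rightarrow> bool" where
  "perm_of u v \<longleftrightarrow> distinct u \<and> distinct v \<and> set u = set v"

definition S :: "'a list \<Rightarrow> 'a list \<Rightarrow> int" where
  "S u v = sign (rearr_perm u v)"

lemma perm_of_len: "perm_of u v \<Longrightarrow> length u = length v"
  unfolding perm_of_def by (metis distinct_card)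

lemma rp_val:
  assumes "perm_of u v" "i < length u"
  shows "rearr_perm u v i < length u \<and> u ! (rearr_perm u v i) = v ! i"
proof -
  have l: "length u = length v" using perm_of_len[OF assms(1)] .
  have "v ! i \<in> set u" using assms l unfolding perm_of_def by (metis nth_mem)
  then have "\<exists>!j. j < length u \<and> u ! j = v ! i" using assms(1) unfolding perm_of_def by (intro distinct_Ex1) auto
  from theI'[OF this] show ?thesis using assms(2) unfolding rearr_perm_def by simp
qed

lemma rp_unique:
  assumes "perm_of u v" "i < length u" "j < length u" "u ! j = v ! i"
  shows "rearr_perm u v i = j"
proof -
  have "rearr_perm u v i < length u \<and> u ! (rearr_perm u v i) = v ! i" by (rule rp_val[OF assms(1,2)])
  then show ?thesis using assms(1,3,4) unfolding perm_of_def by (metis nth_eq_iff_index_eq)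
qed

lemma rp_out: "\<not> i < length u \<Longrightarrow> rearr_perm u v i = i"
  by (simp add: rearr_perm_def)

lemma rp_permutes:
  assumes "perm_of u v"
  shows "rearr_perm u v permutes {..<length u}"
proof (rule inj_imp_permutes)
  have l: "length u = length v" using perm_of_len[OF assms(1)] .
  show "inj_on (rearr_perm u v) {..<length u}"
  proof (rule inj_onI)
    fix i j assume ij: "i \<in> {..<length u}" "j \<in> {..<length u}" "rearr_perm u v i = rearr_perm u v j"
    then have "v ! i = v ! j" using rp_val[OF assms, of i] rp_val[OF assms, of j] by auto
    then show "i = j" using ij l assms unfolding perm_of_def by (simp add: nth_eq_iff_index_eq)
  qed
qed (use rp_val[OF assms] rp_out in auto)

lemma rp_permutation: "perm_of u v \<Longrightarrow> permutation (rearr_perm u v)"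
  using rp_permutes permutation_permutes by blast

lemma S_comp:
  assumes "perm_of u w" "perm_of w v"
  shows "S u v = S u w * S w v"
proof -
  have uv: "perm_of u v" using assms unfolding perm_of_def by auto
  have lw: "length u = length w" "length w = length v" using assms perm_of_len by auto
  have "rearr_perm u v = rearr_perm u w \<circ> rearr_perm w v"
  proof
    fix i show "rearr_perm u v i = (rearr_perm u w \<circ> rearr_perm w v) i"
    proof (cases "i < length u")
      case True
      have 1: "rearr_perm w v i < length w \<and> w ! rearr_perm w v i = v ! i" using rp_val[OF assms(2)] True lw by auto
      have 2: "rearr_perm u w (rearr_perm w v i) < length u \<and> u ! rearr_perm u w (rearr_perm w v i) = w ! rearr_perm w v i"
        using rp_val[OF assms(1)] 1 lw by auto
      show ?thesis using rp_unique[OF uv True] 1 2 by simp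
    next
      case False then show ?thesis using lw by (simp add: rp_out)
    qed
  qed
  then show ?thesis unfolding S_def using sign_compose rp_permutation assms by metis
qed

lemma S_refl: "distinct u \<Longrightarrow> S u u = 1"
proof -
  assume d: "distinct u"
  have p: "perm_of u u" using d by (simp add: perm_of_def)
  have "rearr_perm u u = id"
  proof
    fix i show "rearr_perm u u i = id i"
      by (cases "i < length u") (auto simp: rp_unique[OF p] rp_out)
  qed
  then show ?thesis by (simp add: S_def)
qed

lemma S_pm: "S u v = 1 \<or> S u v = -1"
  by (simp add: S_def sign_def)

lemma S_sym: assumes "perm_of u v" shows "S v u = S u v"
proof -
  have vu: "perm_of v u" using assms by (auto simp: perm_of_def)
  have "S u u = S u v * S v u" by (rule S_comp[OF assms vu])
  then have "S u v * S v u = 1" using assms by (simp add: S_refl perm_of_def)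
  then show ?thesis using S_pm[of u v] S_pm[of v u] by auto
qed

lemma S_swap:
  assumes d: "distinct (A @ x # y # B)"
  shows "S (A @ x # y # B) (A @ y # x # B) = -1"
proof -
  let ?u = "A @ x # y # B" and ?v = "A @ y # x # B"
  have p: "perm_of ?u ?v" using d by (auto simp: perm_of_def)
  have xy: "x \<noteq> y" using d by auto
  have "rearr_perm ?u ?v = Transposition.transpose (length A) (Suc (length A))"
  proof
    fix i show "rearr_perm ?u ?v i = Transposition.transpose (length A) (Suc (length A)) i"
    proof (cases "i < length ?u")
      case True
      show ?thesis
        by (rule rp_unique[OF p True]) (use True in \<open>auto simp: nth_append nth_Cons transpose_def split: nat.split\<close>)
    next
      case False then show ?thesis by (auto simp: rp_out transpose_def)
    qed
  qed
  then show ?thesis by (simp add: S_def sign_swap_id)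
qed

definition sh :: "(nat \<Rightarrow> nat) \<Rightarrow> nat \<Rightarrow> nat" where
  "sh p i = (if i = 0 then 0 else Suc (p (i - 1)))"

lemma sign_sh:
  assumes "p permutes {..<n}"
  shows "sign (sh p) = sign p"
proof -
  have "map_permutation {..<n} Suc p = sh p"
  proof
    fix i
    show "map_permutation {..<n} Suc p i = sh p i"
    proof (cases "i \<in> Suc ` {..<n}")
      case True
      then obtain j where j: "j < n" "i = Suc j" by auto
      have "inv_into {..<n} Suc (Suc j) = j" using j by (intro inv_into_f_eq) auto
      then show ?thesis using j by (simp add: map_permutation_def restrict_id_def sh_def)
    next
      case False
      then have "i = 0 \<or> i > n" by (cases i) auto
      then show ?thesis using False assms
        by (auto simp: map_permutation_def restrict_id_def sh_def permutes_not_in)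
    qed
  qed
  then show ?thesis using sign_map_permutation[of Suc "{..<n}" p] assms by simp
qed

lemma S_cons:
  assumes "perm_of (a # u) (a # v)"
  shows "S (a # u) (a # v) = S u v"
proof -
  have uv: "perm_of u v" using assms by (auto simp: perm_of_def)
  have l: "length u = length v" using perm_of_len[OF uv] .
  have "rearr_perm (a # u) (a # v) = sh (rearr_perm u v)"
  proof
    fix i show "rearr_perm (a # u) (a # v) i = sh (rearr_perm u v) i"
    proof (cases "i < length (a # u)")
      case True
      show ?thesis
      proof (cases i)
        case 0 then show ?thesis using rp_unique[OF assms True, of 0] by (simp add: sh_def)
      next
        case (Suc k)
        then have k: "k < length u" using True by simp
        have "rearr_perm u v k < length u \<and> u ! rearr_perm u v k = v ! k" by (rule rp_val[OF uv k])
        then show ?thesis using rp_unique[OF assms True, of "Suc (rearr_perm u v k)"] Suc by (simp add: sh_def)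
      qed
    next
      case False
      then show ?thesis by (cases i) (auto simp: rp_out sh_def)
    qed
  qed
  then show ?thesis unfolding S_def using sign_sh[OF rp_permutes[OF uv]] by simp
qed

lemma S_move:
  assumes "distinct (A @ c # B)"
  shows "S (A @ c # B) (c # A @ B) = (-1)^length A"
  using assms
proof (induction A)
  case Nil then show ?case by (simp add: S_refl)
next
  case (Cons a A)
  have "S (a # A @ c # B) (c # a # A @ B) = S (a # A @ c # B) (a # c # A @ B) * S (a # c # A @ B) (c # a # A @ B)"
    by (rule S_comp) (use Cons.prems in \<open>auto simp: perm_of_def\<close>)
  also have "S (a # A @ c # B) (a # c # A @ B) = S (A @ c # B) (c # A @ B)"
    by (rule S_cons) (use Cons.prems in \<open>auto simp: perm_of_def\<close>)
  also have "S (a # c # A @ B) (c # a # A @ B) = -1"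
    using S_swap[of "[]" a c "A @ B"] Cons.prems by auto
  finally show ?case using Cons by simp
qed

lemma sgnw_S: "perm_of w \<gamma> \<Longrightarrow> sgnw w \<gamma> = S w \<gamma>"
  by (simp add: sgnw_def perm_of_def word_minus_def S_def filter_False)


definition blk :: "'a \<times> 'a \<Rightarrow> 'a set" where "blk p = {fst p, snd p}"

definition pT :: "('a \<Rightarrow> 'a \<Rightarrow> 'r::comm_ring_1) \<Rightarrow> ('a \<times> 'a) list \<Rightarrow> 'r" where
  "pT g ps = prod_list (map (\<lambda>(x,y). g x y) ps)"

lemma flat_Nil[simp]: "flat_pairs [] = []" by (simp add: flat_pairs_def)
lemma flat_Cons[simp]: "flat_pairs ((a,b) # ps) = a # b # flat_pairs ps" by (simp add: flat_pairs_def)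
lemma flat_append[simp]: "flat_pairs (ps @ qs) = flat_pairs ps @ flat_pairs qs" by (simp add: flat_pairs_def)
lemma set_flat: "set (flat_pairs ps) = \<Union> (blk ` set ps)"
proof (induction ps)
  case (Cons p ps) then show ?case by (cases p) (auto simp: blk_def)
qed simp

lemma pT_Nil[simp]: "pT g [] = 1" by (simp add: pT_def)
lemma pT_Cons[simp]: "pT g ((a,b) # ps) = g a b * pT g ps" by (simp add: pT_def)
lemma pT_append[simp]: "pT g (ps @ qs) = pT g ps * pT g qs" by (simp add: pT_def)

lemma blk_ab[simp]: "blk (a,b) = {a,b}" by (simp add: blk_def)

lemma S_pair_front:
  assumes "distinct (C @ c # d # D)"
  shows "S (c # d # C @ D) (C @ c # d # D) = 1"
proof -
  have "S (C @ c # d # D) (c # d # C @ D) = S (C @ c # d # D) (c # C @ d # D) * S (c # C @ d # D) (c # d # C @ D)"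
    by (rule S_comp) (use assms in \<open>auto simp: perm_of_def\<close>)
  also have "S (C @ c # d # D) (c # C @ d # D) = (-1)^length C"
    using S_move[of C c "d # D"] assms by simp
  also have "S (c # C @ d # D) (c # d # C @ D) = S (C @ d # D) (d # C @ D)"
    by (rule S_cons) (use assms in \<open>auto simp: perm_of_def\<close>)
  also have "\<dots> = (-1)^length C" using S_move[of C d D] assms by simp
  also have "(-1::int)^length C * (-1)^length C = ((-1) * (-1))^length C" by (rule power_mult_distrib[symmetric])
  also have "\<dots> = 1" by simp
  finally have "S (C @ c # d # D) (c # d # C @ D) = 1" .
  then show ?thesis using S_sym[of "C @ c # d # D" "c # d # C @ D"] assms by (auto simp: perm_of_def)
qed

context asym begin

lemma indep:
  assumes "distinct (flat_pairs ps)" "distinct (flat_pairs qs)" "mset (map blk ps) = mset (map blk qs)"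
  shows "of_int (S (flat_pairs ps) (flat_pairs qs)) * pT g qs = pT g ps"
  using assms
proof (induction ps arbitrary: qs)
  case Nil
  then have "qs = []" by simp
  then show ?case by (simp add: S_refl)
next
  case (Cons p ps)
  obtain a b where p: "p = (a, b)" by (cases p)
  have "{a,b} \<in> set (map blk qs)" using Cons.prems(3) p by (metis blk_ab list.set_intros(1) list.simps(9) set_mset_mset)
  then obtain k where k: "k < length qs" "blk (qs ! k) = {a,b}" by (auto simp: in_set_conv_nth)
  obtain c d where cd: "qs ! k = (c, d)" by (cases "qs ! k")
  define qs' where "qs' = take k qs @ drop (Suc k) qs"
  define C where "C = flat_pairs (take k qs)"
  define D where "D = flat_pairs (drop (Suc k) qs)"
  have qs: "qs = take k qs @ (c, d) # drop (Suc k) qs" using k cd by (metis id_take_nth_drop)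
  have fq: "flat_pairs qs = C @ c # d # D" unfolding C_def D_def by (subst qs) simp
  have fq': "flat_pairs qs' = C @ D" unfolding C_def D_def qs'_def by simp
  have pq: "pT g qs = g c d * pT g qs'" unfolding qs'_def by (subst qs) (simp add: mult_ac)
  have mq: "mset (map blk qs) = add_mset {a,b} (mset (map blk qs'))"
    unfolding qs'_def using k cd by (subst qs) simp
  have m': "mset (map blk ps) = mset (map blk qs')" using Cons.prems(3) mq p by simp
  have dq: "distinct (C @ c # d # D)" using Cons.prems(2) fq by simp
  have dq': "distinct (flat_pairs qs')" using dq fq' by simp
  have dp: "distinct (a # b # flat_pairs ps)" using Cons.prems(1) p by simp
  have IH: "of_int (S (flat_pairs ps) (C @ D)) * pT g qs' = pT g ps"
    using Cons.IH[of qs'] Cons.prems(1) p dq' m' fq' by simp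
  have setsq: "set (flat_pairs (p # ps)) = set (flat_pairs qs)"
  proof -
    have "blk ` set (p # ps) = blk ` set qs" using arg_cong[OF Cons.prems(3), of set_mset] by simp
    then show ?thesis by (simp only: set_flat)
  qed
  have cdab: "{c, d} = {a, b}" using k cd by simp
  have s1: "S (a # b # flat_pairs ps) (flat_pairs qs) = S (a # b # flat_pairs ps) (c # d # C @ D) * S (c # d # C @ D) (C @ c # d # D)"
    unfolding fq by (rule S_comp) (use dp dq setsq p fq in \<open>auto simp: perm_of_def\<close>)
  have s2: "S (c # d # C @ D) (C @ c # d # D) = 1" by (rule S_pair_front[OF dq])
  have sets': "set (flat_pairs ps) = set (C @ D)"
    using setsq p fq cdab dp dq by auto
  have key: "of_int (S (a # b # flat_pairs ps) (c # d # C @ D)) * g c d = of_int (S (flat_pairs ps) (C @ D)) * g a b"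
  proof (cases "c = a")
    case True
    then have db: "d = b" using cdab dq by (metis doubleton_eq_iff)
    have "S (a # b # flat_pairs ps) (a # b # C @ D) = S (b # flat_pairs ps) (b # C @ D)"
      by (rule S_cons) (use dp dq sets' True db in \<open>auto simp: perm_of_def\<close>)
    also have "\<dots> = S (flat_pairs ps) (C @ D)"
      by (rule S_cons) (use dp dq sets' True db in \<open>auto simp: perm_of_def\<close>)
    finally show ?thesis using True db by simp
  next
    case False
    then have cb: "c = b" "d = a" using cdab by (auto simp: doubleton_eq_iff)
    have "S (a # b # flat_pairs ps) (b # a # C @ D) = S (a # b # flat_pairs ps) (b # a # flat_pairs ps) * S (b # a # flat_pairs ps) (b # a # C @ D)"
      by (rule S_comp) (use dp dq sets' cb in \<open>auto simp: perm_of_def\<close>)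
    also have "S (a # b # flat_pairs ps) (b # a # flat_pairs ps) = -1"
      using S_swap[of "[]" a b "flat_pairs ps"] dp by simp
    also have "S (b # a # flat_pairs ps) (b # a # C @ D) = S (a # flat_pairs ps) (a # C @ D)"
      by (rule S_cons) (use dp dq sets' cb in \<open>auto simp: perm_of_def\<close>)
    also have "\<dots> = S (flat_pairs ps) (C @ D)"
      by (rule S_cons) (use dp dq sets' cb in \<open>auto simp: perm_of_def\<close>)
    finally have "S (a # b # flat_pairs ps) (c # d # C @ D) = - S (flat_pairs ps) (C @ D)" using cb by simp
    then show ?thesis using cb anti[of b a] by simp
  qed
  have "of_int (S (flat_pairs (p # ps)) (flat_pairs qs)) * pT g qs
      = of_int (S (a # b # flat_pairs ps) (c # d # C @ D)) * g c d * pT g qs'"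
    using s1 s2 p pq by (simp add: mult.assoc)
  also have "\<dots> = g a b * (of_int (S (flat_pairs ps) (C @ D)) * pT g qs')"
    using key by (simp add: mult_ac)
  also have "\<dots> = pT g (p # ps)" using IH p by simp
  finally show ?case .
qed

end

lemma pm_iff: "perfect_matching Z M \<longleftrightarrow> \<Union>M = Z \<and> (\<forall>a\<in>M. \<forall>b\<in>M. a \<noteq> b \<longrightarrow> a \<inter> b = {}) \<and> (\<forall>e\<in>M. card e = 2)"
  unfolding perfect_matching_def partition_on_def disjoint_def by force

lemma blk_fun: "(\<lambda>(x,y). {x,y}) = blk"
  by (auto simp: blk_def)

lemma listing_blk: "listing_of M ps \<Longrightarrow> distinct (map blk ps) \<and> set (map blk ps) = M"
  unfolding listing_of_def blk_fun by (metis card_distinct length_map)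

lemma flat_distinct:
  "distinct (map blk l) \<Longrightarrow> (\<forall>p\<in>set l. card (blk p) = 2) \<Longrightarrow>
   (\<forall>p\<in>set l. \<forall>q\<in>set l. blk p \<noteq> blk q \<longrightarrow> blk p \<inter> blk q = {}) \<Longrightarrow> distinct (flat_pairs l)"
proof (induction l)
  case Nil then show ?case by simp
next
  case (Cons p l)
  obtain a b where p: "p = (a, b)" by (cases p)
  have ab: "a \<noteq> b" using Cons.prems(2) p by (auto simp: card_2_iff doubleton_eq_iff)
  have nin: "z \<notin> set (flat_pairs l)" if "z \<in> {a,b}" for z
  proof
    assume "z \<in> set (flat_pairs l)"
    then obtain q where q: "q \<in> set l" "z \<in> blk q" by (auto simp: set_flat)
    have "blk q \<noteq> {a,b}" using Cons.prems(1) p q(1) by auto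
    then have "blk p \<inter> blk q = {}" using Cons.prems(3) p q(1) by auto
    then show False using q(2) that p by auto
  qed
  have "distinct (flat_pairs l)" using Cons by auto
  then show ?case using ab nin p by simp
qed

lemma listing_flat:
  assumes "perfect_matching Z M" "listing_of M ps"
  shows "distinct (flat_pairs ps) \<and> set (flat_pairs ps) = Z"
proof -
  have b: "distinct (map blk ps)" "set (map blk ps) = M" using listing_blk[OF assms(2)] by auto
  have "distinct (flat_pairs ps)"
    by (rule flat_distinct) (use b assms(1) in \<open>auto simp: pm_iff\<close>)
  moreover have "set (flat_pairs ps) = Z" using b assms(1) by (auto simp: set_flat pm_iff)
  ultimately show ?thesis by simp
qed

lemma pm_finite: "perfect_matching Z M \<Longrightarrow> finite Z \<Longrightarrow> finite M"
  unfolding pm_iff by (metis Sup_le_iff finite_Pow_iff finite_subset subsetI PowI)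

lemma listing_exists:
  fixes M :: "'a set set"
  assumes "perfect_matching Z M" "finite Z"
  shows "\<exists>ps. listing_of M ps"
proof -
  have fM: "finite M" using pm_finite assms by blast
  obtain l where l: "set l = M" "distinct l" using finite_distinct_list[OF fM] by blast
  define pick :: "'a set \<Rightarrow> 'a \<times> 'a" where "pick e = (SOME p. blk p = e)" for e
  have pk: "blk (pick e) = e" if "e \<in> M" for e
  proof -
    have "card e = 2" using assms(1) that by (auto simp: pm_iff)
    then obtain x y where "e = {x,y}" by (auto simp: card_2_iff)
    then have "\<exists>p. blk p = e" by (intro exI[of _ "(x,y)"]) simp
    then show ?thesis unfolding pick_def by (rule someI_ex)
  qed
  define ps where "ps = map pick l"
  have mb: "map blk ps = l" unfolding ps_def map_map by (rule map_idI) (use pk l in auto)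
  have "distinct ps" using mb l(2) by (metis distinct_map)
  moreover have "length ps = card M" using l distinct_card by (metis length_map ps_def)
  moreover have "set (map (\<lambda>(x,y). {x,y}) ps) = M" using mb l by (simp add: blk_fun)
  ultimately show ?thesis unfolding listing_of_def by blast
qed

lemma pm_empty: "perfect_matching {} M \<longleftrightarrow> M = {}"
  by (auto simp: perfect_matching_def partition_on_empty)

lemma pm_insert_intro:
  assumes "x \<notin> W" "y \<in> W" "perfect_matching (W - {y}) M"
  shows "perfect_matching (insert x W) (insert {x,y} M)"
proof -
  have xy: "x \<noteq> y" using assms by auto
  have U: "\<Union>M = W - {y}" and D: "\<forall>a\<in>M. \<forall>b\<in>M. a \<noteq> b \<longrightarrow> a \<inter> b = {}" and C: "\<forall>e\<in>M. card e = 2"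
    using assms(3) by (auto simp: pm_iff)
  have "\<Union>(insert {x,y} M) = insert x W" using U assms by auto
  moreover have "\<forall>a\<in>insert {x,y} M. \<forall>b\<in>insert {x,y} M. a \<noteq> b \<longrightarrow> a \<inter> b = {}"
  proof -
    have "{x,y} \<inter> e = {}" if "e \<in> M" for e
      using that U assms by blast
    then show ?thesis using D by blast
  qed
  moreover have "\<forall>e\<in>insert {x,y} M. card e = 2" using C xy by auto
  ultimately show ?thesis by (simp add: pm_iff)
qed

lemma pm_insert_elim:
  assumes "x \<notin> W" "perfect_matching (insert x W) M"
  shows "\<exists>y\<in>W. \<exists>M'. perfect_matching (W - {y}) M' \<and> M = insert {x,y} M'"
proof -
  have U: "\<Union>M = insert x W" and D: "\<forall>a\<in>M. \<forall>b\<in>M. a \<noteq> b \<longrightarrow> a \<inter> b = {}" and C: "\<forall>e\<in>M. card e = 2"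
    using assms(2) by (auto simp: pm_iff)
  obtain e where e: "e \<in> M" "x \<in> e" using U by blast
  have "card e = 2" using C e by auto
  then obtain y where ey: "e = {x,y}" "x \<noteq> y" using e(2) by (auto simp: card_2_iff doubleton_eq_iff)
  have "y \<in> \<Union>M" using e ey by blast
  then have yW: "y \<in> W" using U ey by auto
  define M' where "M' = M - {e}"
  have "\<Union>M' = W - {y}"
  proof
    show "\<Union>M' \<subseteq> W - {y}"
    proof
      fix z assume "z \<in> \<Union>M'"
      then obtain e' where e': "e' \<in> M" "e' \<noteq> e" "z \<in> e'" by (auto simp: M'_def)
      then have "e' \<inter> e = {}" using D e by blast
      then show "z \<in> W - {y}" using e' U ey by blast
    qed
    show "W - {y} \<subseteq> \<Union>M'"
    proof
      fix z assume z: "z \<in> W - {y}"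
      then obtain e' where e': "e' \<in> M" "z \<in> e'" using U by blast
      have "z \<notin> e" using z ey assms(1) by auto
      then show "z \<in> \<Union>M'" using e' by (auto simp: M'_def)
    qed
  qed
  then have "perfect_matching (W - {y}) M'" using D C by (auto simp: pm_iff M'_def)
  moreover have "M = insert {x,y} M'" using e ey by (auto simp: M'_def)
  ultimately show ?thesis using yW by blast
qed

lemma pm_set_finite: "finite Z \<Longrightarrow> finite {M. perfect_matching Z M}"
proof -
  assume f: "finite Z"
  have "{M. perfect_matching Z M} \<subseteq> Pow (Pow Z)" by (auto simp: pm_iff)
  then show ?thesis using f by (meson finite_Pow_iff finite_subset)
qed

lemma sum_pm_insert:
  assumes "x \<notin> W" "finite W"
  shows "(\<Sum>M | perfect_matching (insert x W) M. h M) = (\<Sum>y\<in>W. \<Sum>M | perfect_matching (W - {y}) M. h (insert {x,y} M))"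
proof -
  have eq: "{M. perfect_matching (insert x W) M} = (\<Union>y\<in>W. insert {x,y} ` {M. perfect_matching (W - {y}) M})"
    using pm_insert_elim[OF assms(1)] pm_insert_intro[OF assms(1)] by blast
  have nin: "{x,y} \<notin> M" if "perfect_matching (W - {y}) M" for y M
    using that assms(1) by (auto simp: pm_iff)
  have "(\<Sum>M | perfect_matching (insert x W) M. h M) = (\<Sum>y\<in>W. sum h (insert {x,y} ` {M. perfect_matching (W - {y}) M}))"
    unfolding eq
  proof (rule sum.UNION_disjoint)
    show "finite W" by fact
    show "\<forall>y\<in>W. finite (insert {x, y} ` {M. perfect_matching (W - {y}) M})"
      using assms(2) pm_set_finite by auto
    show "\<forall>y\<in>W. \<forall>y'\<in>W. y \<noteq> y' \<longrightarrow> insert {x, y} ` {M. perfect_matching (W - {y}) M} \<inter> insert {x, y'} ` {M. perfect_matching (W - {y'}) M} = {}"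
    proof (intro ballI impI)
      fix y y' assume yy: "y \<in> W" "y' \<in> W" "y \<noteq> y'"
      show "insert {x, y} ` {M. perfect_matching (W - {y}) M} \<inter> insert {x, y'} ` {M. perfect_matching (W - {y'}) M} = {}"
      proof (rule ccontr)
        assume "\<not> ?thesis"
        then obtain M1 M2 where m: "perfect_matching (W - {y}) M1" "perfect_matching (W - {y'}) M2" "insert {x,y} M1 = insert {x,y'} M2"
          by auto
        have "{x,y} \<noteq> {x,y'}" using yy assms(1) by (auto simp: doubleton_eq_iff)
        then have "{x,y} \<in> M2" using m(3) by blast
        then have "x \<in> \<Union>M2" by blast
        then show False using m(2) assms(1) by (auto simp: pm_iff)
      qed
    qed
  qed
  also have "\<dots> = (\<Sum>y\<in>W. \<Sum>M | perfect_matching (W - {y}) M. h (insert {x,y} M))"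
  proof (rule sum.cong[OF refl])
    fix y assume "y \<in> W"
    have "inj_on (insert {x,y}) {M. perfect_matching (W - {y}) M}"
      by (rule inj_onI) (use nin in \<open>auto simp: insert_ident\<close>)
    then show "sum h (insert {x,y} ` {M. perfect_matching (W - {y}) M}) = (\<Sum>M | perfect_matching (W - {y}) M. h (insert {x,y} M))"
      by (simp add: sum.reindex)
  qed
  finally show ?thesis .
qed


definition mterm :: "('a \<Rightarrow> 'a \<Rightarrow> 'r::comm_ring_1) \<Rightarrow> 'a list \<Rightarrow> 'a set set \<Rightarrow> 'r" where
  "mterm g u M = (let ps = (SOME ps. listing_of M ps) in
        of_int (sgnw u (flat_pairs ps)) * prod_list (map (\<lambda>(x,y). g x y) ps))"

lemma MS_mterm: "matching_sum g u = (\<Sum>M | perfect_matching (set u) M. mterm g u M)"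
  by (simp add: matching_sum_def mterm_def)

lemma set_dl: "distinct w \<Longrightarrow> i < length w \<Longrightarrow> set (dl i w) = set w - {w ! i}"
proof -
  assume d: "distinct w" and i: "i < length w"
  have w: "w = take i w @ w ! i # drop (Suc i) w" by (rule id_take_nth_drop[OF i])
  have "distinct (take i w @ w ! i # drop (Suc i) w)" using d w by simp
  then show ?thesis unfolding dl_def by (subst (3) w) auto
qed

lemma distinct_dl: "distinct w \<Longrightarrow> distinct (dl i w)"
  unfolding dl_def
  by (auto simp: set_take_disj_set_drop_if_distinct dest: in_set_takeD in_set_dropD)

context asym begin

lemma mterm_eq:
  assumes d: "distinct u" and pm: "perfect_matching (set u) M" and l: "listing_of M ps"
  shows "mterm g u M = of_int (S u (flat_pairs ps)) * pT g ps"
proof -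
  define ps0 where "ps0 = (SOME ps. listing_of M ps)"
  have l0: "listing_of M ps0" unfolding ps0_def using l by (rule someI)
  have f: "distinct (flat_pairs ps) \<and> set (flat_pairs ps) = set u" by (rule listing_flat[OF pm l])
  have f0: "distinct (flat_pairs ps0) \<and> set (flat_pairs ps0) = set u" by (rule listing_flat[OF pm l0])
  have "sgnw u (flat_pairs ps0) = S u (flat_pairs ps0)"
    by (rule sgnw_S) (use d f0 in \<open>auto simp: perm_of_def\<close>)
  also have "\<dots> = S u (flat_pairs ps) * S (flat_pairs ps) (flat_pairs ps0)"
    by (rule S_comp) (use d f f0 in \<open>auto simp: perm_of_def\<close>)
  finally have s: "sgnw u (flat_pairs ps0) = \<dots>" .
  have b: "distinct (map blk ps) \<and> set (map blk ps) = M" "distinct (map blk ps0) \<and> set (map blk ps0) = M"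
    using listing_blk l l0 by auto
  have "mset (map blk ps) = mset (map blk ps0)"
    using set_eq_iff_mset_eq_distinct[of "map blk ps" "map blk ps0"] b by metis
  then have i: "of_int (S (flat_pairs ps) (flat_pairs ps0)) * pT g ps0 = pT g ps"
    using f f0 by (intro indep) auto
  have "mterm g u M = of_int (sgnw u (flat_pairs ps0)) * pT g ps0"
    by (simp add: mterm_def ps0_def[symmetric] pT_def)
  also have "\<dots> = of_int (S u (flat_pairs ps)) * (of_int (S (flat_pairs ps) (flat_pairs ps0)) * pT g ps0)"
    unfolding s by (simp add: mult.assoc)
  also have "\<dots> = of_int (S u (flat_pairs ps)) * pT g ps" using i by simp
  finally show ?thesis .
qed

lemma MS_Nil: "matching_sum g [] = 1"
proof -
  have "{M. perfect_matching (set ([]::'a list)) M} = {{}}" by (auto simp: pm_empty)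
  moreover have "(SOME ps. listing_of {} ps) = ([] :: ('a \<times> 'a) list)" by (rule some_equality) (auto simp: listing_of_def)
  moreover have "sgnw ([]::'a list) [] = 1"
  proof -
    have "rearr_perm ([]::'a list) [] = id" by (rule ext) (simp add: rearr_perm_def)
    then show ?thesis by (simp add: sgnw_def word_minus_def)
  qed
  ultimately show ?thesis by (simp add: MS_mterm mterm_def)
qed

lemma mterm_insert:
  assumes d: "distinct (x # w)" and i: "i < length w" and pm: "perfect_matching (set (dl i w)) M"
  shows "mterm g (x # w) (insert {x, w!i} M) = (-1)^i * g x (w!i) * mterm g (dl i w) M"
proof -
  have dw: "distinct w" using d by simp
  have xw: "x \<notin> set w" using d by simp
  obtain ps where l: "listing_of M ps" using listing_exists[OF pm] by auto
  have f: "distinct (flat_pairs ps) \<and> set (flat_pairs ps) = set (dl i w)" by (rule listing_flat[OF pm l])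
  have sdl: "set (dl i w) = set w - {w!i}" by (rule set_dl[OF dw i])
  have b: "distinct (map blk ps) \<and> set (map blk ps) = M" using listing_blk[OF l] .
  have fM: "finite M" using pm pm_finite by blast
  have nin: "{x, w!i} \<notin> M"
  proof
    assume "{x, w!i} \<in> M"
    then have "x \<in> \<Union>M" by blast
    then show False using pm sdl xw by (auto simp: pm_iff)
  qed
  have l2: "listing_of (insert {x, w!i} M) ((x, w!i) # ps)"
  proof -
    have "(x, w!i) \<notin> set ps"
    proof
      assume "(x, w!i) \<in> set ps"
      then have "blk (x, w!i) \<in> blk ` set ps" by (rule imageI)
      then have "{x, w!i} \<in> set (map blk ps)" by simp
      then show False using nin b by simp
    qed
    moreover have "card (insert {x, w!i} M) = Suc (card M)" using fM nin by simp
    ultimately show ?thesis using l unfolding listing_of_def by simp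
  qed
  have pm2: "perfect_matching (set (x # w)) (insert {x, w!i} M)"
    using pm_insert_intro[of x "set w" "w!i" M] pm xw i sdl by simp
  have sf: "set (flat_pairs ps) = set w - {w!i}" using f sdl by simp
  have df: "distinct (flat_pairs ps)" using f by simp
  have wi: "w!i \<in> set w" using i by simp
  have ddl: "distinct (dl i w)" by (rule distinct_dl[OF dw])
  have p1: "perm_of (x # w) (x # w!i # flat_pairs ps)"
    unfolding perm_of_def
  proof (intro conjI)
    show "distinct (x # w)" by (rule d)
    have "x \<noteq> w!i" using xw wi by blast
    then show "distinct (x # w!i # flat_pairs ps)" using df sf xw wi by simp
    show "set (x # w) = set (x # w!i # flat_pairs ps)" using sf wi by auto
  qed
  have p2: "perm_of w (w!i # dl i w)"
    unfolding perm_of_def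
  proof (intro conjI)
    show "distinct w" by (rule dw)
    show "distinct (w!i # dl i w)" using ddl sdl by simp
    show "set w = set (w!i # dl i w)" using sdl wi by auto
  qed
  have p3: "perm_of (w!i # dl i w) (w!i # flat_pairs ps)"
    unfolding perm_of_def
  proof (intro conjI)
    show "distinct (w!i # dl i w)" using ddl sdl by simp
    show "distinct (w!i # flat_pairs ps)" using df sf by simp
    show "set (w!i # dl i w) = set (w!i # flat_pairs ps)" using sdl sf by simp
  qed
  have "mterm g (x # w) (insert {x, w!i} M) = of_int (S (x # w) (x # w!i # flat_pairs ps)) * (g x (w!i) * pT g ps)"
    using mterm_eq[OF d pm2 l2] by simp
  also have "S (x # w) (x # w!i # flat_pairs ps) = S w (w!i # flat_pairs ps)"
    by (rule S_cons[OF p1])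
  also have "\<dots> = S w (w!i # dl i w) * S (w!i # dl i w) (w!i # flat_pairs ps)"
    by (rule S_comp[OF p2]) (use p3 in \<open>simp add: perm_of_def\<close>)
  also have "S (w!i # dl i w) (w!i # flat_pairs ps) = S (dl i w) (flat_pairs ps)"
    by (rule S_cons[OF p3])
  also have "S w (w!i # dl i w) = (-1)^i"
  proof -
    have w: "w = take i w @ w ! i # drop (Suc i) w" by (rule id_take_nth_drop[OF i])
    have "S (take i w @ w ! i # drop (Suc i) w) (w ! i # take i w @ drop (Suc i) w) = (-1)^length (take i w)"
      by (rule S_move) (simp only: w[symmetric] dw)
    moreover have "length (take i w) = i" using i by simp
    ultimately show ?thesis by (simp only: dl_def w[symmetric])
  qed
  also have "mterm g (dl i w) M = of_int (S (dl i w) (flat_pairs ps)) * pT g ps"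
    by (rule mterm_eq[OF distinct_dl[OF dw] pm l])
  ultimately show ?thesis by (simp add: mult_ac)
qed

lemma MS_Cons:
  assumes d: "distinct (x # w)"
  shows "matching_sum g (x # w) = (\<Sum>i<length w. (-1)^i * g x (w!i) * matching_sum g (dl i w))"
proof -
  have dw: "distinct w" and xw: "x \<notin> set w" using d by auto
  have "matching_sum g (x # w) = (\<Sum>y\<in>set w. \<Sum>M | perfect_matching (set w - {y}) M. mterm g (x # w) (insert {x,y} M))"
    unfolding MS_mterm using sum_pm_insert[OF xw] by simp
  also have "\<dots> = (\<Sum>i<length w. \<Sum>M | perfect_matching (set w - {w!i}) M. mterm g (x # w) (insert {x,w!i} M))"
    using sum.reindex_bij_betw[OF bij_betw_nth[OF dw refl refl], of "\<lambda>y. \<Sum>M | perfect_matching (set w - {y}) M. mterm g (x # w) (insert {x,y} M)"]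
    by simp
  also have "\<dots> = (\<Sum>i<length w. (-1)^i * g x (w!i) * matching_sum g (dl i w))"
  proof (rule sum.cong[OF refl])
    fix i assume i: "i \<in> {..<length w}"
    have sdl: "set w - {w!i} = set (dl i w)" using set_dl[OF dw] i by simp
    show "(\<Sum>M | perfect_matching (set w - {w!i}) M. mterm g (x # w) (insert {x,w!i} M)) = (-1)^i * g x (w!i) * matching_sum g (dl i w)"
      unfolding sdl MS_mterm sum_distrib_left
      by (rule sum.cong[OF refl]) (use mterm_insert[OF d] i in auto)
  qed
  finally show ?thesis .
qed

lemma MS_pfr: "distinct u \<Longrightarrow> matching_sum g u = pfr g u"
proof (induction "length u" arbitrary: u rule: less_induct)
  case less
  show ?case
  proof (cases u)
    case Nil then show ?thesis by (simp add: MS_Nil)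
  next
    case (Cons x w)
    have "matching_sum g (dl i w) = pfr g (dl i w)" if "i < length w" for i
      using less Cons that distinct_dl[of w i] by (intro less(1)) (auto simp: dl_def)
    then show ?thesis using MS_Cons[of x w] less(2) Cons by simp
  qed
qed

end

context asymd begin

lemma pf_pfr: "pf g w = pfr g w"
proof -
  consider "w = []" | "w \<noteq> []" "\<not> distinct w" | "w \<noteq> []" "distinct w" "odd (length w)" | "w \<noteq> []" "distinct w" "even (length w)"
    by blast
  then show ?thesis
  proof cases
    case 1 then show ?thesis by (simp add: pf_def)
  next
    case 2 then show ?thesis by (simp add: pf_def pfr_nondistinct)
  next
    case 3 then show ?thesis by (simp add: pf_def pfr_odd)
  next
    case 4 then show ?thesis by (simp add: pf_def MS_pfr)
  qed
qed

end

theorem mainTheorem3: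
  fixes f :: "'a \<Rightarrow> 'a \<Rightarrow> 'r::comm_ring_1"
    and \<alpha> \<beta> :: "'a list" and n :: nat
  assumes antisym: "\<And>x y. f x y = - f y x"
    and diag: "\<And>x. f x x = 0"
    and dist: "distinct (\<alpha> @ \<beta>)"
    and ev: "even (length \<alpha>)"
    and len: "length \<beta> = 2 * n"
    and n1: "n \<ge> 1"
  shows "pf f \<alpha> ^ (n - 1) * pf f (\<alpha> @ \<beta>) = matching_sum (\<lambda>x y. pf f (\<alpha> @ [x, y])) \<beta>"
proof -
  interpret asymd f by unfold_locales (rule antisym, rule diag)
  have pf: "pf f = pfr f" by (rule ext) (rule pf_pfr)
  interpret B: asym "\<lambda>x y. pfr f (\<alpha> @ [x, y])"
  proof unfold_locales
    fix x y show "pfr f (\<alpha> @ [x, y]) = - pfr f (\<alpha> @ [y, x])" using pfr_swap[of \<alpha> x y "[]"] by simp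
  qed
  have "matching_sum (\<lambda>x y. pfr f (\<alpha> @ [x, y])) \<beta> = pfr (\<lambda>x y. pfr f (\<alpha> @ [x, y])) \<beta>"
    by (rule B.MS_pfr) (use dist in auto)
  then show ?thesis unfolding pf using main_pfr[OF dist ev len n1] by simp
qed


end
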